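(* (a) Let $\rho(0)=1$, $\rho(t)=\frac1{2t}(1-\sqrt{1-4t})$ for $0<t\le1/4$, and $\kappa(t)=(1-\sqrt2\,\rho(t)t)^{-1}$ for $0\le t\le1/4$. Then $\rho$ and $\kappa$ are increasing on $[0,1/4]$, $\rho(t)\le\kappa(t)$ for all $t\in[0,1/4]$, and for every positive integer $n$, $\rho\big(\tfrac{n}{(n+1)^2}\big)=\tfrac{n+1}{n}$ and $\kappa\big(\tfrac{n}{(n+1)^2}\big)=\big(1-\tfrac{\sqrt2}{n+1}\big)^{-1}<\big(1-\tfrac{10}{7(n+1)}\big)^{-1}$. (b) Let $A\in M_2(\mathbb C)$ satisfy $\|A-A^2\|_{HS}\le\varepsilon<2/9$. Then $\|2A-I\|_{HS}\ge(2-6\|A-A^2\|_{HS})^{1/2}$, and $\operatorname{tr}(A)\in\bigcup_{j\in\{0,1,2\}}\overline{\mathbb D}_j(\sqrt2\rho(\varepsilon)\varepsilon)\subseteq\bigcup_{j\in\{0,1,2\}}\overline{\mathbb D}_j(10/21)$. Moreover: if $|\operatorname{tr}(A)-2|<1/2$ then $\|I-A\|_{HS}\le\kappa(\varepsilon)\varepsilon$; if $|\operatorname{tr}(A)|<1/2$ then $\|A\|_{HS}\le\kappa(\varepsilon)\varepsilon$; if $|\operatorname{tr}(A)-1|<1/2$ then there is a rank-one idempotent $P\in M_2(\mathbb C)$ with $\|A-P\|_{HS}\le\rho(\varepsilon)\varepsilon$.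
   Context: $\|A\|_{HS}=(\operatorname{tr}(A^*A))^{1/2}$ is the Hilbert–Schmidt norm; $\overline{\mathbb D}_w(r)$ is the closed disc in $\mathbb C$ of centre $w$ and radius $r$. *)

theory Defs
  imports "HOL-Analysis.Analysis"
begin

definition rho :: "real \<Rightarrow> real" where
  "rho t = (if t = 0 then 1 else (1 - sqrt (1 - 4 * t)) / (2 * t))"

definition kappa :: "real \<Rightarrow> real" where
  "kappa t = inverse (1 - sqrt 2 * rho t * t)"

definition adjoint_mat :: "complex^'n^'n \<Rightarrow> complex^'n^'n" where
  "adjoint_mat A = (\<chi> i j. cnj (A $ j $ i))"

definition hs_norm :: "complex^'n^'n \<Rightarrow> real" where
  "hs_norm A = sqrt (Re (trace (adjoint_mat A ** A)))"

end

theory Submission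
  imports Defs
begin


lemma rho_alt: assumes "0 \<le> t" "t \<le> 1/4" shows "rho t = 2 / (1 + sqrt (1 - 4*t))"
proof (cases "t = 0")
  case True then show ?thesis by (simp add: rho_def)
next
  case False
  define s where "s = sqrt (1 - 4*t)"
  have s0: "s \<ge> 0" and ss: "s^2 = 1 - 4*t" using assms by (auto simp: s_def)
  have "(1 - s) / (2*t) = 2 / (1 + s)"
    using False s0 ss by (simp add: field_simps power2_eq_square)
  then show ?thesis using False by (simp add: rho_def s_def)
qed

lemma rho_t: assumes "0 \<le> t" "t \<le> 1/4" shows "rho t * t = (1 - sqrt (1 - 4*t)) / 2"
  using assms by (cases "t = 0") (auto simp: rho_def field_simps)

lemma sqrt_dec: assumes "0 \<le> x" "x < y" "y \<le> 1/4" shows "sqrt (1 - 4*y) < sqrt (1 - 4*x)"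
  using assms by (simp)

lemma rho_pos: assumes "0 \<le> t" "t \<le> 1/4" shows "rho t > 0"
  using assms rho_alt[OF assms] by (simp add: add_pos_nonneg)

lemma rho_mono: "strict_mono_on {0..1/4} rho"
proof (rule strict_mono_onI)
  fix x y assume "x \<in> {0..1/4::real}" "y \<in> {0..1/4::real}" "x < y"
  then have h: "0 \<le> x" "x < y" "y \<le> 1/4" by auto
  have "sqrt (1 - 4*y) < sqrt (1 - 4*x)" using sqrt_dec[OF h] .
  moreover have "sqrt (1 - 4*y) \<ge> 0" "sqrt (1 - 4*x) \<ge> 0" using h by auto
  ultimately have "2 / (1 + sqrt (1 - 4*x)) < 2 / (1 + sqrt (1 - 4*y))"
    by (intro divide_strict_left_mono) (auto intro!: add_pos_nonneg mult_pos_pos)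
  then show "rho x < rho y" using h by (simp add: rho_alt)
qed

lemma rhot_le: assumes "0 \<le> t" "t \<le> 1/4" shows "rho t * t \<le> 1/2" "rho t * t \<ge> 0"
  using assms by (auto simp: rho_t)

lemma kappa_alt: assumes "0 \<le> t" "t \<le> 1/4" shows "kappa t = 1 / (1 - sqrt 2 * (rho t * t))"
  by (simp add: kappa_def divide_inverse mult.assoc)

lemma den_pos: assumes "0 \<le> t" "t \<le> 1/4" shows "1 - sqrt 2 * (rho t * t) > 0"
proof -
  have "sqrt 2 * (rho t * t) \<le> sqrt 2 * (1/2)" using rhot_le[OF assms] by simp
  moreover have "sqrt 2 < 2" by (rule real_less_lsqrt) (auto simp: power2_eq_square)
  ultimately show ?thesis by linarith
qed

lemma kappa_mono: "strict_mono_on {0..1/4} kappa"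
proof (rule strict_mono_onI)
  fix x y assume "x \<in> {0..1/4::real}" "y \<in> {0..1/4::real}" "x < y"
  then have h: "0 \<le> x" "x < y" "y \<le> 1/4" by auto
  have "sqrt (1 - 4*y) < sqrt (1 - 4*x)" using sqrt_dec[OF h] .
  then have "rho x * x < rho y * y" using h by (simp add: rho_t)
  then have "sqrt 2 * (rho x * x) < sqrt 2 * (rho y * y)" by simp
  have "1 / (1 - sqrt 2 * (rho x * x)) < 1 / (1 - sqrt 2 * (rho y * y))"
  proof (rule divide_strict_left_mono)
    show "1 - sqrt 2 * (rho y * y) < 1 - sqrt 2 * (rho x * x)" using \<open>sqrt 2 * (rho x * x) < sqrt 2 * (rho y * y)\<close> by simp
  qed (use den_pos[of y] den_pos[of x] h in auto)
  then show "kappa x < kappa y" using h by (simp add: kappa_alt)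
qed

lemma rho_fix: assumes "0 \<le> t" "t \<le> 1/4" shows "rho t = 1 / (1 - rho t * t)"
proof -
  define s where "s = sqrt (1 - 4*t)"
  have s0: "s \<ge> 0" using assms by (simp add: s_def)
  have "rho t * t = (1 - s)/2" using assms by (simp add: rho_t s_def)
  then have e: "1 - rho t * t = (1 + s)/2" by simp
  show ?thesis unfolding e by (simp add: rho_alt[OF assms] s_def)
qed

lemma rho_le_kappa: assumes "0 \<le> t" "t \<le> 1/4" shows "rho t \<le> kappa t"
proof -
  have a: "rho t * t \<ge> 0" using rhot_le[OF assms] by simp
  have "sqrt 2 * (rho t * t) \<ge> 1 * (rho t * t)" using a by (intro mult_right_mono) auto
  then have "1 - rho t * t \<ge> 1 - sqrt 2 * (rho t * t)" by simp
  then have "1 / (1 - rho t * t) \<le> 1 / (1 - sqrt 2 * (rho t * t))"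
    using den_pos[OF assms] by (intro divide_left_mono) auto
  then show ?thesis using rho_fix[OF assms] kappa_alt[OF assms] by simp
qed

lemma rho_n: assumes "n \<ge> (1::nat)"
  shows "rho (real n / (real n + 1)^2) = (real n + 1) / real n"
    "rho (real n / (real n + 1)^2) * (real n / (real n + 1)^2) = 1 / (real n + 1)"
proof -
  define t where "t = real n / (real n + 1)^2"
  have "1 - 4*t = ((real n - 1)/(real n + 1))^2"
    by (simp add: t_def divide_simps power2_eq_square) (simp add: algebra_simps)
  moreover have "(real n - 1)/(real n + 1) \<ge> 0" using assms by simp
  ultimately have sq: "sqrt (1 - 4*t) = (real n - 1)/(real n + 1)" using assms by simp
  have t0: "0 \<le> t" by (simp add: t_def)
  have t1: "t \<le> 1/4"
  proof -
    have "0 \<le> (real n - 1)^2" by simp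
    then have "4 * real n \<le> (real n + 1)^2" by (simp add: power2_eq_square algebra_simps)
    then show ?thesis by (simp add: t_def field_simps)
  qed
  show "rho t = (real n + 1) / real n" unfolding rho_alt[OF t0 t1] sq using assms
    by (simp add: field_simps)
  show "rho t * t = 1 / (real n + 1)" unfolding rho_t[OF t0 t1] sq using assms
    by (simp add: field_simps)
qed

lemma part_a:
  "(strict_mono_on {0..1/4} rho \<and> strict_mono_on {0..1/4} kappa \<and>
    (\<forall>t\<in>{0..1/4}. rho t \<le> kappa t) \<and>
    (\<forall>n::nat. n \<ge> 1 \<longrightarrow>
       rho (real n / (real n + 1)^2) = (real n + 1) / real n \<and>
       kappa (real n / (real n + 1)^2) = inverse (1 - sqrt 2 / (real n + 1)) \<and>
       inverse (1 - sqrt 2 / (real n + 1)) < inverse (1 - 10 / (7 * (real n + 1)))))"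
proof (intro conjI allI impI ballI rho_mono kappa_mono)
  fix t :: real assume "t \<in> {0..1/4}" then show "rho t \<le> kappa t" using rho_le_kappa by auto
next
  fix n :: nat assume n: "n \<ge> 1"
  show "rho (real n / (real n + 1)^2) = (real n + 1) / real n" using rho_n[OF n] by simp
  show "kappa (real n / (real n + 1)^2) = inverse (1 - sqrt 2 / (real n + 1))"
    unfolding kappa_def mult.assoc rho_n(2)[OF n] by simp
  have s: "sqrt 2 < 10/7"
    by (rule real_less_lsqrt) (auto simp: power2_eq_square)
  have "10 / (7 * (real n + 1)) < 1" using n by (simp add: field_simps)
  moreover have "sqrt 2 / (real n + 1) < 10 / (7 * (real n + 1))"
  proof -
    have "(real n+1)*(sqrt 2*7) < (real n+1)*10" using s by (intro mult_strict_left_mono) auto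
    then show ?thesis by (simp add: field_simps)
  qed
  ultimately show "inverse (1 - sqrt 2 / (real n + 1)) < inverse (1 - 10 / (7 * (real n + 1)))"
    by (intro less_imp_inverse_less) auto
qed



lemma adj_mult: "adjoint_mat (X ** Y) = adjoint_mat Y ** (adjoint_mat X :: complex^'n^'n)"
  by (simp add: adjoint_mat_def matrix_matrix_mult_def vec_eq_iff mult.commute)

lemma adj_adj[simp]: "adjoint_mat (adjoint_mat X) = X"
  by (simp add: adjoint_mat_def vec_eq_iff)

lemma re_trace: "Re (trace (adjoint_mat X ** X)) = (\<Sum>i\<in>UNIV. \<Sum>k\<in>UNIV. (cmod (X$k$i))^2)"
proof -
  have "trace (adjoint_mat X ** X) = (\<Sum>i\<in>UNIV. \<Sum>k\<in>UNIV. cnj (X$k$i) * X$k$i)"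
    by (simp add: trace_def adjoint_mat_def matrix_matrix_mult_def)
  also have "\<dots> = (\<Sum>i\<in>UNIV. \<Sum>k\<in>UNIV. complex_of_real ((cmod (X$k$i))^2))"
    by (intro sum.cong refl) (metis complex_norm_square mult.commute)
  finally show ?thesis by (simp add: Re_sum)
qed

definition unitary :: "complex^'n^'n \<Rightarrow> bool" where
  "unitary U \<longleftrightarrow> adjoint_mat U ** U = mat 1 \<and> U ** adjoint_mat U = mat 1"

lemma hs_conj: assumes "unitary U"
  shows "hs_norm (U ** X ** adjoint_mat U) = hs_norm X"
proof -
  have u1: "adjoint_mat U ** U = mat 1" using assms by (simp add: unitary_def)
  have "adjoint_mat (U ** X ** adjoint_mat U) = U ** adjoint_mat X ** adjoint_mat U"
    by (simp add: adj_mult matrix_mul_assoc)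
  then have "adjoint_mat (U ** X ** adjoint_mat U) ** (U ** X ** adjoint_mat U)
     = U ** (adjoint_mat X ** X) ** adjoint_mat U"
    by (simp add: matrix_mul_assoc) (metis matrix_mul_assoc matrix_mul_rid u1)
  then have "trace (adjoint_mat (U ** X ** adjoint_mat U) ** (U ** X ** adjoint_mat U))
     = trace (adjoint_mat X ** X)"
    by (metis matrix_mul_assoc matrix_mul_rid trace_mul_sym u1)
  then show ?thesis by (simp add: hs_norm_def)
qed

lemma hs2: "hs_norm (X::complex^2^2) = sqrt ((cmod (X$1$1))^2 + (cmod (X$1$2))^2 + (cmod (X$2$1))^2 + (cmod (X$2$2))^2)"
  by (simp add: hs_norm_def re_trace sum_2)

lemma conj_sub: "U ** (X - Y) ** V = U ** X ** V - U ** Y ** (V::'a::comm_ring_1^'n^'n)"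
  by (simp add: matrix_matrix_mult_def vec_eq_iff sum_subtractf ring_distribs)

lemma conj_scale: "U ** (c *\<^sub>R X) ** V = c *\<^sub>R (U ** X ** (V::complex^'n^'n))"
  by (metis matrix_scalar_ac scalar_matrix_assoc)

lemma unit_id: "unitary U \<Longrightarrow> U ** mat 1 ** adjoint_mat U = mat 1"
  by (simp add: unitary_def)

lemma unit_sq: "unitary U \<Longrightarrow> (U ** T ** adjoint_mat U) ** (U ** T ** adjoint_mat U) = U ** (T ** T) ** adjoint_mat U"
  unfolding unitary_def by (metis matrix_mul_assoc matrix_mul_rid)

lemma unit_trace: "unitary U \<Longrightarrow> trace (U ** T ** adjoint_mat U) = trace T"
  unfolding unitary_def by (metis matrix_mul_assoc matrix_mul_rid trace_mul_sym)



lemma mat2_eq: "(X::'a^2^2) = Y \<longleftrightarrow> X$1$1 = Y$1$1 \<and> X$1$2 = Y$1$2 \<and> X$2$1 = Y$2$1 \<and> X$2$2 = Y$2$2"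
  by (auto simp: vec_eq_iff forall_2)

lemma mult2: "(X ** (Y::'a::semiring_1^2^2))$i$j = X$i$1 * Y$1$j + X$i$2 * Y$2$j"
  by (simp add: matrix_matrix_mult_def sum_2)

lemma eigvec: fixes A :: "complex^2^2"
  obtains v1 v2 l where "(v1, v2) \<noteq> (0, 0)" "A$1$1 * v1 + A$1$2 * v2 = l * v1" "A$2$1 * v1 + A$2$2 * v2 = l * v2"
proof (cases "A$1$2 = 0")
  case True
  show ?thesis by (rule that[of 0 1 "A$2$2"]) (auto simp: True)
next
  case False
  define a where "a = A$1$1"
  define b where "b = A$1$2"
  define c where "c = A$2$1"
  define d where "d = A$2$2"
  define s where "s = csqrt ((a+d)^2 - 4*(a*d-b*c))"
  define l where "l = ((a+d) + s)/2"
  have s2: "s^2 = (a+d)^2 - 4*(a*d-b*c)" by (simp add: s_def)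
  have ch: "l^2 - (a+d)*l + (a*d - b*c) = 0"
    unfolding l_def using s2 by (simp add: field_simps power2_eq_square) (drule arg_cong[where f="\<lambda>x. 2*x"], simp add: algebra_simps)
  show ?thesis
  proof (rule that[of b "l - a" l])
    show "(b, l - a) \<noteq> (0, 0)" using False by (simp add: b_def)
    show "A$1$1 * b + A$1$2 * (l - a) = l * b" by (simp add: a_def b_def algebra_simps)
    show "A$2$1 * b + A$2$2 * (l - a) = l * (l - a)"
      using ch unfolding a_def b_def c_def d_def by (simp add: algebra_simps power2_eq_square)
  qed
qed

lemma schur2: fixes A :: "complex^2^2"
  obtains U where "unitary U" "(adjoint_mat U ** A ** U)$2$1 = 0"
proof -
  obtain v1 v2 l where nz: "(v1, v2) \<noteq> (0, 0)" and e1: "A$1$1 * v1 + A$1$2 * v2 = l * v1"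
    and e2: "A$2$1 * v1 + A$2$2 * v2 = l * v2" by (rule eigvec)
  define n where "n = sqrt ((cmod v1)^2 + (cmod v2)^2)"
  have "(cmod v1)^2 + (cmod v2)^2 > 0" using nz by (auto simp: add_pos_nonneg add_nonneg_pos)
  then have n0: "n > 0" and n2: "n^2 = (cmod v1)^2 + (cmod v2)^2" by (auto simp: n_def)
  define u1 where "u1 = v1 / of_real n"
  define u2 where "u2 = v2 / of_real n"
  have un: "u1 * cnj u1 + u2 * cnj u2 = 1"
  proof -
    have "u1 * cnj u1 = v1 * cnj v1 / of_real (n^2)" "u2 * cnj u2 = v2 * cnj v2 / of_real (n^2)"
      by (simp_all add: u1_def u2_def power2_eq_square)
    then have "u1 * cnj u1 + u2 * cnj u2 = of_real ((cmod v1)^2 + (cmod v2)^2) / of_real (n^2)"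
      by (simp add: complex_norm_square[symmetric] add_divide_distrib del: of_real_power)
    then show ?thesis using n0 unfolding n2[symmetric] by simp
  qed
  have f1: "A$1$1 * u1 + A$1$2 * u2 = l * u1" using e1 n0 by (simp add: u1_def u2_def field_simps)
  have f2: "A$2$1 * u1 + A$2$2 * u2 = l * u2" using e2 n0 by (simp add: u1_def u2_def field_simps)
  define U :: "complex^2^2" where "U = vector [vector [u1, - cnj u2], vector [u2, cnj u1]]"
  have U: "U$1$1 = u1" "U$1$2 = - cnj u2" "U$2$1 = u2" "U$2$2 = cnj u1" by (simp_all add: U_def)
  have aU: "adjoint_mat U $i$j = cnj (U$j$i)" for i j by (simp add: adjoint_mat_def)
  show ?thesis
  proof (rule that)
    show "unitary U" unfolding unitary_def mat2_eq
      using un by (simp add: mult2 aU U mat_def algebra_simps)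
    have "(adjoint_mat U ** A ** U)$2$1 = - u2 * (A$1$1 * u1 + A$1$2 * u2) + u1 * (A$2$1 * u1 + A$2$2 * u2)"
      by (simp add: mult2 aU U algebra_simps)
    also have "\<dots> = 0" by (simp add: f1 f2)
    finally show "(adjoint_mat U ** A ** U)$2$1 = 0" .
  qed
qed



lemma vec2_eq: "(x::'a^2) = y \<longleftrightarrow> x$1 = y$1 \<and> x$2 = y$2"
  by (auto simp: vec_eq_iff forall_2)

lemma rows2: "rows (P::'a::field^2^2) = {row 1 P, row 2 P}"
  unfolding rows_def by (auto simp: UNIV_2)

lemma rank1_aux: fixes P :: "'a::field^2^2"
  assumes "r \<noteq> 0" "r \<in> rows P" "\<And>x. x \<in> rows P \<Longrightarrow> \<exists>k. x = k *s r"
  shows "rank P = 1"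
  unfolding row_rank_def_gen
proof (rule vec.dim_unique[of "{r}"])
  show "{r} \<subseteq> rows P" using assms by auto
  show "rows P \<subseteq> vec.span {r}" using assms(3) by (auto simp: vec.span_singleton)
  show "vec.independent {r}" using assms(1) by simp
qed simp

lemma rank1: fixes P :: "'a::field^2^2"
  assumes nz: "P \<noteq> 0" and dt: "P$1$1*P$2$2 = P$1$2*P$2$1"
  shows "rank P = 1"
proof (cases "row 1 P = 0")
  case True
  then have r2: "row 2 P \<noteq> 0" using nz by (auto simp: mat2_eq vec2_eq row_def)
  show ?thesis
  proof (rule rank1_aux[OF r2])
    show "row 2 P \<in> rows P" by (simp add: rows2)
    fix x assume "x \<in> rows P"
    then show "\<exists>k. x = k *s row 2 P" unfolding rows2 using True
      by (auto intro: exI[of _ 0] exI[of _ 1])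
  qed
next
  case False
  show ?thesis
  proof (rule rank1_aux[OF False])
    show "row 1 P \<in> rows P" by (simp add: rows2)
    have "\<exists>k. row 2 P = k *s row 1 P"
    proof (cases "P$1$1 = 0")
      case True
      then have "P$1$2 \<noteq> 0" using False by (auto simp: vec2_eq row_def)
      then have "P$2$1 = 0" using dt True by simp
      show ?thesis
        by (rule exI[of _ "P$2$2 / P$1$2"]) (simp add: vec2_eq row_def True \<open>P$2$1 = 0\<close> \<open>P$1$2 \<noteq> 0\<close>)
    next
      case F: False
      show ?thesis
        apply (rule exI[of _ "P$2$1 / P$1$1"])
        using F dt by (simp add: vec2_eq row_def field_simps)
    qed
    then show "\<exists>k. x = k *s row 1 P" if "x \<in> rows P" for x
      using that unfolding rows2 by (auto intro: exI[of _ 1])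
  qed
qed



lemma rho_le_mono: "0 \<le> x \<Longrightarrow> x \<le> y \<Longrightarrow> y \<le> 1/4 \<Longrightarrow> rho x \<le> rho y"
proof (cases "x = y")
  case False
  assume a: "0 \<le> x" "x \<le> y" "y \<le> 1/4"
  then have "x < y" using False by simp
  have "rho x < rho y" by (rule strict_mono_onD[OF rho_mono]) (use a \<open>x < y\<close> in auto)
  then show ?thesis by simp
qed simp

lemma root_small: fixes z :: complex
  assumes z: "cmod z < 1/2" and m: "cmod (z - z^2) \<le> e" and e: "e \<le> 1/4"
  shows "cmod z \<le> rho e * cmod (z - z^2)"
proof -
  define m where "m = cmod (z - z^2)"
  define r where "r = cmod z"
  have m0: "0 \<le> m" and me: "m \<le> e" using m by (auto simp: m_def)
  have "z = (z - z^2) + z^2" by simp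
  then have "r \<le> m + r^2" unfolding r_def m_def
    by (metis norm_power norm_triangle_ineq)
  define s where "s = sqrt (1 - 4*m)"
  have s0: "s \<ge> 0" and s2: "s^2 = 1 - 4*m" using me e by (auto simp: s_def)
  have "(r - (1 - s)/2) * (r - (1 + s)/2) = r^2 - r + m"
    using s2 by (simp add: field_simps power2_eq_square)
  also have "\<dots> \<ge> 0" using \<open>r \<le> m + r^2\<close> by simp
  finally have p: "(r - (1 - s)/2) * (r - (1 + s)/2) \<ge> 0" .
  have "r - (1 + s)/2 < 0" using z s0 by (simp add: r_def)
  then have "r \<le> (1 - s)/2" using p by (smt (verit) mult_less_0_iff)
  also have "\<dots> = rho m * m" using m0 me e by (simp add: rho_t s_def)
  also have "\<dots> \<le> rho e * m" using rho_le_mono[OF m0 me e] m0 by (simp add: mult_right_mono)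
  finally show ?thesis by (simp add: r_def m_def)
qed

lemma near01: fixes z :: complex
  assumes m: "cmod (z - z^2) \<le> e" and e: "e < 1/4"
  shows "cmod z \<le> rho e * cmod (z - z^2) \<or> cmod (1 - z) \<le> rho e * cmod (z - z^2)"
proof -
  have f: "z - z^2 = z * (1 - z)" by (simp add: algebra_simps power2_eq_square)
  have "cmod z < 1/2 \<or> cmod (1 - z) < 1/2"
  proof (rule ccontr)
    assume "\<not> ?thesis"
    then have "cmod z * cmod (1 - z) \<ge> 1/2 * (1/2)" by (intro mult_mono) auto
    then show False using m e by (simp add: f norm_mult)
  qed
  moreover have eq: "(1 - z) - (1 - z)^2 = z - z^2" by (simp add: algebra_simps power2_eq_square)
  moreover have "cmod (1 - z) < 1/2 \<Longrightarrow> cmod (1 - z) \<le> rho e * cmod (z - z^2)"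
    using root_small[of "1 - z" e] m e unfolding eq by auto
  ultimately show ?thesis using root_small[of z e] m e by auto
qed

lemma sqrt_scale3:
  assumes "0 \<le> k" "0 \<le> x1" "x1 \<le> k*a1" "0 \<le> x2" "x2 \<le> k*a2" "0 \<le> x3" "x3 \<le> k*a3"
  shows "sqrt (x1^2 + x2^2 + x3^2) \<le> k * sqrt (a1^2 + a2^2 + a3^2)"
proof -
  have "x1^2 \<le> (k*a1)^2" "x2^2 \<le> (k*a2)^2" "x3^2 \<le> (k*a3)^2"
    using assms by (auto intro!: power_mono)
  then have "x1^2 + x2^2 + x3^2 \<le> k^2 * (a1^2 + a2^2 + a3^2)"
    by (simp add: power_mult_distrib algebra_simps)
  then have "sqrt (x1^2 + x2^2 + x3^2) \<le> sqrt (k^2 * (a1^2 + a2^2 + a3^2))"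
    by (rule real_sqrt_le_mono)
  also have "\<dots> = k * sqrt (a1^2 + a2^2 + a3^2)" using assms(1) by (simp add: real_sqrt_mult)
  finally show ?thesis .
qed

lemma sum_le_sqrt2: fixes a b c :: real assumes "0\<le>a" "0\<le>b" and that: "0 \<le> c"
  shows "a + b \<le> sqrt 2 * sqrt (a^2 + c + b^2)"
proof -
  have "(a+b)^2 \<le> 2 * (a^2 + c + b^2)" using that
  proof -
    have "0 \<le> (a - b)^2" by simp
    then show ?thesis using that by (simp add: power2_eq_square algebra_simps)
  qed
  then have "a + b \<le> sqrt (2 * (a^2 + c + b^2))" by (rule real_le_rsqrt)
  then show ?thesis by (metis real_sqrt_mult)
qed

lemma rho29: "rho (2/9) = 3/2"
  using rho_n(1)[of 2] by (simp add: power2_eq_square)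

lemma R_bound: assumes "0 \<le> e" "e < 2/9" shows "sqrt 2 * rho e * e \<le> 10/21"
proof -
  have r: "rho e \<le> 3/2" using rho_le_mono[of e "2/9"] assms rho29 by simp
  have "rho e \<ge> 0" using rho_pos[of e] assms by simp
  then have "rho e * e \<le> 3/2 * (2/9)" using r assms by (intro mult_mono) auto
  moreover have "sqrt 2 \<le> 10/7" by (rule real_le_lsqrt) (auto simp: power2_eq_square)
  ultimately have "sqrt 2 * (rho e * e) \<le> 10/7 * (3/2*(2/9))"
    using \<open>rho e \<ge> 0\<close> assms mult_mono[of "sqrt 2" "10/7" "rho e * e" "3/2*(2/9)"] by auto
  then show ?thesis by (simp add: mult.assoc)
qed



lemma sq21: fixes z :: complex shows "(cmod (2*z - 1))^2 \<ge> 1 - 4 * cmod (z - z^2)"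
proof -
  have e: "(2*z-1)^2 = 1 - 4*(z - z^2)" by (simp add: power2_eq_square algebra_simps)
  have "(cmod (2*z - 1))^2 = cmod ((2*z-1)^2)" by (simp add: norm_power)
  then have "(cmod (2*z - 1))^2 = cmod (1 - 4 * (z - z^2))" unfolding e .
  moreover have "cmod (1::complex) \<le> cmod (1 - 4 * (z - z^2)) + cmod (4 * (z - z^2))"
    by (metis diff_add_cancel norm_triangle_ineq)
  moreover have "cmod (4 * (z - z^2)) = 4 * cmod (z - z^2)" by (simp only: norm_mult) simp
  ultimately show ?thesis by simp
qed

lemma kbound: assumes "0 \<le> k" "0 \<le> x1" "x1 \<le> k*m1" "0 \<le> x2" "x2 \<le> k*q" "0 \<le> x3" "x3 \<le> k*m2"
  "\<delta> = sqrt (m1^2 + q^2 + m2^2)" "\<delta> \<le> \<epsilon>"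
  shows "sqrt (x1^2 + x2^2 + x3^2) \<le> k*\<epsilon>"
proof -
  have "sqrt (x1^2 + x2^2 + x3^2) \<le> k * \<delta>" unfolding assms(8)
    by (rule sqrt_scale3) (use assms in auto)
  also have "\<dots> \<le> k * \<epsilon>" using assms by (intro mult_left_mono) auto
  finally show ?thesis .
qed

lemma nat_dist1: assumes "j \<noteq> (k::nat)" shows "cmod (of_nat k - of_nat j :: complex) \<ge> 1"
proof -
  have "(of_nat k - of_nat j :: complex) = of_int (int k - int j)" by simp
  moreover have "int k - int j \<noteq> 0" using assms by simp
  then have "\<bar>int k - int j\<bar> \<ge> 1" by arith
  then have "\<bar>real_of_int (int k - int j)\<bar> \<ge> 1" by linarith
  ultimately show ?thesis by (metis norm_of_int)
qed

lemma part_b: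
  fixes A :: "complex^2^2" and \<epsilon> :: real
  assumes hA: "hs_norm (A - A ** A) \<le> \<epsilon>" and he: "\<epsilon> < 2/9"
  shows "hs_norm (2 *\<^sub>R A - mat 1) \<ge> sqrt (2 - 6 * hs_norm (A - A ** A)) \<and>
      trace A \<in> (\<Union>j\<in>{0,1,2::nat}. cball (of_nat j) (sqrt 2 * rho \<epsilon> * \<epsilon>)) \<and>
      (\<Union>j\<in>{0,1,2::nat}. cball (of_nat j :: complex) (sqrt 2 * rho \<epsilon> * \<epsilon>))
        \<subseteq> (\<Union>j\<in>{0,1,2::nat}. cball (of_nat j) (10/21)) \<and>
      (cmod (trace A - 2) < 1/2 \<longrightarrow> hs_norm (mat 1 - A) \<le> kappa \<epsilon> * \<epsilon>) \<and>
      (cmod (trace A) < 1/2 \<longrightarrow> hs_norm A \<le> kappa \<epsilon> * \<epsilon>) \<and>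
      (cmod (trace A - 1) < 1/2 \<longrightarrow>
         (\<exists>P::complex^2^2. P ** P = P \<and> rank P = 1 \<and> hs_norm (A - P) \<le> rho \<epsilon> * \<epsilon>))"
proof -
  obtain U where U: "unitary U" and T21: "(adjoint_mat U ** A ** U)$2$1 = 0" by (rule schur2)
  define T where "T = adjoint_mat U ** A ** U"
  have AT: "A = U ** T ** adjoint_mat U"
    using U unfolding T_def unitary_def by (metis matrix_mul_assoc matrix_mul_lid matrix_mul_rid)
  define l1 where "l1 = T$1$1"
  define l2 where "l2 = T$2$2"
  define c where "c = T$1$2"
  have t21: "T$2$1 = 0" using T21 by (simp add: T_def)
  define m1 where "m1 = cmod (l1 - l1^2)"
  define m2 where "m2 = cmod (l2 - l2^2)"
  define q where "q = cmod c * cmod (1 - l1 - l2)"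
  define \<delta> where "\<delta> = hs_norm (A - A ** A)"
  have m10: "m1 \<ge> 0" and m20: "m2 \<ge> 0" and q0: "q \<ge> 0" by (auto simp: m1_def m2_def q_def)
  have eqD: "A - A ** A = U ** (T - T ** T) ** adjoint_mat U"
    by (simp add: AT unit_sq[OF U] conj_sub)
  have D11: "(T - T**T)$1$1 = l1 - l1^2" by (simp add: mult2 t21 l1_def power2_eq_square)
  have D22: "(T - T**T)$2$2 = l2 - l2^2" by (simp add: mult2 t21 l2_def power2_eq_square)
  have D21: "(T - T**T)$2$1 = 0" by (simp add: mult2 t21)
  have D12: "(T - T**T)$1$2 = c * (1 - l1 - l2)" by (simp add: mult2 t21 l1_def l2_def c_def algebra_simps)
  have hd: "\<delta> = sqrt (m1^2 + q^2 + m2^2)"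
    unfolding \<delta>_def eqD hs_conj[OF U] unfolding hs2 D11 D22 D21 D12
    by (simp add: m1_def m2_def q_def norm_mult power_mult_distrib)
  have d0: "\<delta> \<ge> 0" by (simp add: hd)
  have e0: "\<epsilon> \<ge> 0" using hA d0 by (simp add: \<delta>_def)
  have de: "\<delta> \<le> \<epsilon>" using hA by (simp add: \<delta>_def)
  have m1d: "m1 \<le> \<delta>" unfolding hd by (rule real_le_rsqrt) (simp add: q0)
  have m2d: "m2 \<le> \<delta>" unfolding hd by (rule real_le_rsqrt) (simp add: q0)
  have qd: "q \<le> \<delta>" unfolding hd by (rule real_le_rsqrt) simp
  have m12: "m1 + m2 \<le> sqrt 2 * \<delta>" unfolding hd by (rule sum_le_sqrt2[OF m10 m20]) simp
  have c1: "hs_norm (2 *\<^sub>R A - mat 1) \<ge> sqrt (2 - 6 * hs_norm (A - A ** A))"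
  proof -
    have E: "2 *\<^sub>R A - mat 1 = U ** (2 *\<^sub>R T - mat 1) ** adjoint_mat U"
      using U by (simp add: AT conj_sub conj_scale unitary_def)
    have "(2 *\<^sub>R T - mat 1)$1$1 = 2*l1 - 1" "(2 *\<^sub>R T - mat 1)$1$2 = 2*c"
      "(2 *\<^sub>R T - mat 1)$2$1 = 0" "(2 *\<^sub>R T - mat 1)$2$2 = 2*l2 - 1"
      by (simp_all add: mat_def t21 l1_def l2_def c_def vector_scaleR_component scaleR_conv_of_real)
    then have h: "hs_norm (2 *\<^sub>R A - mat 1) = sqrt ((cmod (2*l1 - 1))^2 + (cmod (2*c))^2 + (cmod (2*l2 - 1))^2)"
      unfolding E hs_conj[OF U] unfolding hs2 by simp
    have "(cmod (2*l1 - 1))^2 \<ge> 1 - 4*m1" "(cmod (2*l2 - 1))^2 \<ge> 1 - 4*m2"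
      using sq21 by (auto simp: m1_def m2_def)
    moreover have "sqrt 2 \<le> 3/2" by (rule real_le_lsqrt) (auto simp: power2_eq_square)
    then have "sqrt 2 * \<delta> \<le> 3/2 * \<delta>" using d0 by (rule mult_right_mono)
    then have "4 * (sqrt 2 * \<delta>) \<le> 6 * \<delta>" by linarith
    ultimately have "2 - 6 * \<delta> \<le> (cmod (2*l1 - 1))^2 + (cmod (2*c))^2 + (cmod (2*l2 - 1))^2"
      using m12 by (smt (verit) zero_le_power2)
    then show ?thesis unfolding h \<delta>_def[symmetric] by (rule real_sqrt_le_mono)
  qed
  define \<rho> where "\<rho> = rho \<epsilon>"
  define R where "R = sqrt 2 * rho \<epsilon> * \<epsilon>"
  have e14: "\<epsilon> < 1/4" using he by simp
  have rp: "\<rho> > 0" using rho_pos[of \<epsilon>] e0 e14 by (simp add: \<rho>_def)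
  have R1: "R \<le> 10/21" using R_bound[OF e0 he] by (simp add: R_def)
  have s12: "\<rho>*m1 + \<rho>*m2 \<le> R"
  proof -
    have "\<rho>*m1 + \<rho>*m2 = \<rho>*(m1+m2)" by (simp add: algebra_simps)
    also have "m1 + m2 \<le> sqrt 2 * \<epsilon>" using m12 de by (smt (verit) mult_left_mono real_sqrt_ge_zero)
    then have "\<rho>*(m1+m2) \<le> \<rho> * (sqrt 2 * \<epsilon>)" using rp by (intro mult_left_mono) auto
    finally show ?thesis by (simp add: R_def \<rho>_def mult_ac)
  qed
  have n1: "cmod l1 \<le> \<rho>*m1 \<or> cmod (1 - l1) \<le> \<rho>*m1"
    using near01[of l1 \<epsilon>] m1d de e14 by (simp add: m1_def \<rho>_def)
  have n2: "cmod l2 \<le> \<rho>*m2 \<or> cmod (1 - l2) \<le> \<rho>*m2"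
    using near01[of l2 \<epsilon>] m2d de e14 by (simp add: m2_def \<rho>_def)
  have trT: "trace T = l1 + l2" by (simp add: trace_def sum_2 l1_def l2_def)
  have tr: "trace A = l1 + l2" using unit_trace[OF U, of T] AT trT by simp
  have t0: "cmod (0 - (l1+l2)) \<le> cmod l1 + cmod l2" by (simp only: diff_0 norm_minus_cancel) (rule norm_triangle_ineq)
  have t1a: "cmod (1 - (l1+l2)) \<le> cmod (1 - l1) + cmod l2"
    by (metis diff_diff_eq norm_triangle_ineq4)
  have t1b: "cmod (1 - (l1+l2)) \<le> cmod l1 + cmod (1 - l2)"
    by (metis add.commute diff_diff_eq norm_triangle_ineq4)
  have t2: "cmod (2 - (l1+l2)) \<le> cmod (1 - l1) + cmod (1 - l2)"
  proof -
    have "2 - (l1+l2) = (1 - l1) + (1 - l2)" by simp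
    then show ?thesis by (metis norm_triangle_ineq)
  qed
  define P where "P = (\<lambda>j::nat. cmod (of_nat j - (l1+l2)) \<le> R \<and>
     (j=0 \<longrightarrow> cmod l1 \<le> \<rho>*m1 \<and> cmod l2 \<le> \<rho>*m2) \<and>
     (j=2 \<longrightarrow> cmod (1-l1) \<le> \<rho>*m1 \<and> cmod (1-l2) \<le> \<rho>*m2) \<and>
     (j=1 \<longrightarrow> (cmod (1-l1) \<le> \<rho>*m1 \<and> cmod l2 \<le> \<rho>*m2) \<or> (cmod l1 \<le> \<rho>*m1 \<and> cmod (1-l2) \<le> \<rho>*m2)))"
  have J: "\<exists>j\<in>{0,1,2::nat}. P j"
  proof -
    consider "cmod l1 \<le> \<rho>*m1" "cmod l2 \<le> \<rho>*m2" | "cmod (1-l1) \<le> \<rho>*m1" "cmod (1-l2) \<le> \<rho>*m2"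
      | "cmod (1-l1) \<le> \<rho>*m1" "cmod l2 \<le> \<rho>*m2" | "cmod l1 \<le> \<rho>*m1" "cmod (1-l2) \<le> \<rho>*m2"
      using n1 n2 by blast
    then show ?thesis
    proof cases
      case 1 then show ?thesis using t0 s12 unfolding P_def by (intro bexI[of _ 0]) auto
    next
      case 2 then show ?thesis using t2 s12 unfolding P_def by (intro bexI[of _ 2]) auto
    next
      case 3 then show ?thesis using t1a s12 unfolding P_def by (intro bexI[of _ 1]) auto
    next
      case 4 then show ?thesis using t1b s12 unfolding P_def by (intro bexI[of _ 1]) auto
    qed
  qed
  then obtain j where j1: "j \<in> {0,1,2::nat}" and jc: "P j" by blast
  have j: "j \<in> {0,1,2::nat}" "cmod (of_nat j - (l1+l2)) \<le> R"
     "j=0 \<Longrightarrow> cmod l1 \<le> \<rho>*m1 \<and> cmod l2 \<le> \<rho>*m2"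
     "j=2 \<Longrightarrow> cmod (1-l1) \<le> \<rho>*m1 \<and> cmod (1-l2) \<le> \<rho>*m2"
     "j=1 \<Longrightarrow> (cmod (1-l1) \<le> \<rho>*m1 \<and> cmod l2 \<le> \<rho>*m2) \<or> (cmod l1 \<le> \<rho>*m1 \<and> cmod (1-l2) \<le> \<rho>*m2)"
    using j1 jc unfolding P_def by auto
  have jk: "j = k" if "cmod (trace A - of_nat k) < 1/2" for k :: nat
  proof (rule ccontr)
    assume "j \<noteq> k"
    then have "cmod (of_nat k - of_nat j :: complex) \<ge> 1" by (rule nat_dist1)
    moreover have "(of_nat k - of_nat j :: complex) = - (trace A - of_nat k) - (of_nat j - (l1+l2))"
      by (simp add: tr)
    then have "cmod (of_nat k - of_nat j :: complex) \<le> cmod (trace A - of_nat k) + cmod (of_nat j - (l1+l2))"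
      by (metis norm_minus_cancel norm_triangle_ineq4)
    ultimately show False using that j(2) R1 by linarith
  qed
  have c2: "trace A \<in> (\<Union>j\<in>{0,1,2::nat}. cball (of_nat j) (sqrt 2 * rho \<epsilon> * \<epsilon>))"
    using j(1,2) unfolding R_def by (auto simp: dist_norm tr)
  have c3: "(\<Union>j\<in>{0,1,2::nat}. cball (of_nat j :: complex) (sqrt 2 * rho \<epsilon> * \<epsilon>))
        \<subseteq> (\<Union>j\<in>{0,1,2::nat}. cball (of_nat j) (10/21))"
    using R1 unfolding R_def by auto
  have Rlt: "1 - R > 0" using R1 by simp
  have kap: "kappa \<epsilon> = 1 / (1 - R)" by (simp add: kappa_def R_def divide_inverse)
  have kp: "kappa \<epsilon> > 0" using Rlt kap by simp
  have rk: "\<rho> \<le> kappa \<epsilon>" using rho_le_kappa[of \<epsilon>] e0 e14 by (simp add: \<rho>_def)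
  have ck: "cmod c \<le> kappa \<epsilon> * q" if "cmod (1 - l1 - l2) \<ge> 1 - R"
  proof -
    have cc: "cmod c * (1 - R) \<le> cmod c * cmod (1 - l1 - l2)" using that by (intro mult_left_mono) auto
    have "kappa \<epsilon> * (cmod c * (1 - R)) \<le> kappa \<epsilon> * q" unfolding q_def
      by (rule mult_left_mono[OF cc]) (use kp in simp)
    moreover have "kappa \<epsilon> * (cmod c * (1 - R)) = cmod c" using Rlt by (simp add: kap)
    ultimately show ?thesis by simp
  qed
  have c4: "hs_norm (mat 1 - A) \<le> kappa \<epsilon> * \<epsilon>" if "cmod (trace A - 2) < 1/2"
  proof -
    have "j = 2" using jk[of 2] that by simp
    then have a: "cmod (1-l1) \<le> \<rho>*m1" "cmod (1-l2) \<le> \<rho>*m2" using j(4) by auto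
    have "1 - l1 - l2 = ((1 - l1) + (1 - l2)) - 1" by simp
    then have "1 \<le> cmod (1 - l1) + cmod (1 - l2) + cmod (1 - l1 - l2)"
      by (smt (verit, best) diff_add_cancel norm_one norm_triangle_ineq norm_triangle_ineq4 add_diff_cancel_left')
    then have "cmod (1 - l1 - l2) \<ge> 1 - R" using a s12 by linarith
    then have cq: "cmod c \<le> kappa \<epsilon> * q" by (rule ck)
    have E: "mat 1 - A = U ** (mat 1 - T) ** adjoint_mat U"
      using U by (simp add: AT conj_sub unitary_def)
    have "(mat 1 - T)$1$1 = 1 - l1" "(mat 1 - T)$1$2 = - c"
      "(mat 1 - T)$2$1 = 0" "(mat 1 - T)$2$2 = 1 - l2"
      by (simp_all add: mat_def t21 l1_def l2_def c_def)
    then have h: "hs_norm (mat 1 - A) = sqrt ((cmod (1 - l1))^2 + (cmod c)^2 + (cmod (1 - l2))^2)"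
      unfolding E hs_conj[OF U] unfolding hs2 by simp
    show ?thesis unfolding h
      by (rule kbound[OF _ _ _ _ cq _ _ hd de]) (use a rk m10 m20 kp in \<open>auto intro: order_trans mult_right_mono\<close>)
  qed
  have c5: "hs_norm A \<le> kappa \<epsilon> * \<epsilon>" if "cmod (trace A) < 1/2"
  proof -
    have "j = 0" using jk[of 0] that by simp
    then have a: "cmod l1 \<le> \<rho>*m1" "cmod l2 \<le> \<rho>*m2" using j(3) by auto
    have "1 = (1 - l1 - l2) + l1 + l2" by simp
    then have "1 \<le> cmod l1 + cmod l2 + cmod (1 - l1 - l2)"
      by (smt (verit, best) norm_one norm_triangle_ineq)
    then have "cmod (1 - l1 - l2) \<ge> 1 - R" using a s12 by linarith
    then have cq: "cmod c \<le> kappa \<epsilon> * q" by (rule ck)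
    have h: "hs_norm A = sqrt ((cmod l1)^2 + (cmod c)^2 + (cmod l2)^2)"
      unfolding AT hs_conj[OF U] unfolding hs2 by (simp add: t21 l1_def l2_def c_def)
    show ?thesis unfolding h
      by (rule kbound[OF _ _ _ _ cq _ _ hd de]) (use a rk m10 m20 kp in \<open>auto intro: order_trans mult_right_mono\<close>)
  qed
  have mkP: "\<exists>P::complex^2^2. P ** P = P \<and> rank P = 1 \<and> hs_norm (A - P) \<le> rho \<epsilon> * \<epsilon>"
    if Q: "Q ** Q = Q" "det Q = 0" "trace Q = 1" "hs_norm (T - Q) \<le> rho \<epsilon> * \<epsilon>" for Q
  proof (intro exI conjI)
    define P where "P = U ** Q ** adjoint_mat U"
    show "P ** P = P" unfolding P_def unit_sq[OF U] Q(1) ..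
    have "trace P = 1" unfolding P_def unit_trace[OF U] Q(3) ..
    then have nz: "P \<noteq> 0" by (auto simp: trace_def)
    have "det P = 0" unfolding P_def by (simp add: det_mul Q(2))
    then have "P$1$1*P$2$2 = P$1$2*P$2$1" by (simp add: det_2)
    then show "rank P = 1" by (rule rank1[OF nz])
    have "A - P = U ** (T - Q) ** adjoint_mat U" unfolding P_def AT conj_sub ..
    then show "hs_norm (A - P) \<le> rho \<epsilon> * \<epsilon>" using Q(4) hs_conj[OF U] by simp
  qed
  have c6: "\<exists>P::complex^2^2. P ** P = P \<and> rank P = 1 \<and> hs_norm (A - P) \<le> rho \<epsilon> * \<epsilon>"
    if "cmod (trace A - 1) < 1/2"
  proof -
    have "j = 1" using jk[of 1] that by simp
    then have "(cmod (1-l1) \<le> \<rho>*m1 \<and> cmod l2 \<le> \<rho>*m2) \<or> (cmod l1 \<le> \<rho>*m1 \<and> cmod (1-l2) \<le> \<rho>*m2)"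
      using j(5) by auto
    then show ?thesis
    proof
      assume a: "cmod (1-l1) \<le> \<rho>*m1 \<and> cmod l2 \<le> \<rho>*m2"
      define Q :: "complex^2^2" where "Q = vector [vector [1, c], vector [0, 0]]"
      have Qe: "Q$1$1 = 1" "Q$1$2 = c" "Q$2$1 = 0" "Q$2$2 = 0" by (simp_all add: Q_def)
      show ?thesis
      proof (rule mkP)
        show "Q ** Q = Q" by (simp add: mat2_eq mult2 Qe)
        show "det Q = 0" by (simp add: det_2 Qe)
        show "trace Q = 1" by (simp add: trace_def sum_2 Qe)
        have "hs_norm (T - Q) = sqrt ((cmod (1 - l1))^2 + 0^2 + (cmod l2)^2)"
          unfolding hs2 by (simp add: Qe t21 l1_def l2_def c_def norm_minus_commute)
        also have "\<dots> \<le> \<rho> * \<epsilon>"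
          by (rule kbound[OF _ _ _ _ _ _ _ hd de]) (use a rp m10 m20 q0 in auto)
        finally show "hs_norm (T - Q) \<le> rho \<epsilon> * \<epsilon>" by (simp add: \<rho>_def)
      qed
    next
      assume a: "cmod l1 \<le> \<rho>*m1 \<and> cmod (1-l2) \<le> \<rho>*m2"
      define Q :: "complex^2^2" where "Q = vector [vector [0, c], vector [0, 1]]"
      have Qe: "Q$1$1 = 0" "Q$1$2 = c" "Q$2$1 = 0" "Q$2$2 = 1" by (simp_all add: Q_def)
      show ?thesis
      proof (rule mkP)
        show "Q ** Q = Q" by (simp add: mat2_eq mult2 Qe)
        show "det Q = 0" by (simp add: det_2 Qe)
        show "trace Q = 1" by (simp add: trace_def sum_2 Qe)
        have "hs_norm (T - Q) = sqrt ((cmod l1)^2 + 0^2 + (cmod (1 - l2))^2)"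
          unfolding hs2 by (simp add: Qe t21 l1_def l2_def c_def norm_minus_commute)
        also have "\<dots> \<le> \<rho> * \<epsilon>"
          by (rule kbound[OF _ _ _ _ _ _ _ hd de]) (use a rp m10 m20 q0 in auto)
        finally show "hs_norm (T - Q) \<le> rho \<epsilon> * \<epsilon>" by (simp add: \<rho>_def)
      qed
    qed
  qed
  show ?thesis using c1 c2 c3 c4 c5 c6 by blast
qed


theorem lemmal:
  shows
  "(strict_mono_on {0..1/4} rho \<and> strict_mono_on {0..1/4} kappa \<and>
    (\<forall>t\<in>{0..1/4}. rho t \<le> kappa t) \<and>
    (\<forall>n::nat. n \<ge> 1 \<longrightarrow>
       rho (real n / (real n + 1)^2) = (real n + 1) / real n \<and>
       kappa (real n / (real n + 1)^2) = inverse (1 - sqrt 2 / (real n + 1)) \<and>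
       inverse (1 - sqrt 2 / (real n + 1)) < inverse (1 - 10 / (7 * (real n + 1)))))
   \<and>
   (\<forall>(A::complex^2^2) (\<epsilon>::real). hs_norm (A - A ** A) \<le> \<epsilon> \<and> \<epsilon> < 2/9 \<longrightarrow>
      hs_norm (2 *\<^sub>R A - mat 1) \<ge> sqrt (2 - 6 * hs_norm (A - A ** A)) \<and>
      trace A \<in> (\<Union>j\<in>{0,1,2::nat}. cball (of_nat j) (sqrt 2 * rho \<epsilon> * \<epsilon>)) \<and>
      (\<Union>j\<in>{0,1,2::nat}. cball (of_nat j :: complex) (sqrt 2 * rho \<epsilon> * \<epsilon>))
        \<subseteq> (\<Union>j\<in>{0,1,2::nat}. cball (of_nat j) (10/21)) \<and>
      (cmod (trace A - 2) < 1/2 \<longrightarrow> hs_norm (mat 1 - A) \<le> kappa \<epsilon> * \<epsilon>) \<and>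
      (cmod (trace A) < 1/2 \<longrightarrow> hs_norm A \<le> kappa \<epsilon> * \<epsilon>) \<and>
      (cmod (trace A - 1) < 1/2 \<longrightarrow>
         (\<exists>P::complex^2^2. P ** P = P \<and> rank P = 1 \<and> hs_norm (A - P) \<le> rho \<epsilon> * \<epsilon>)))"
  using part_a part_b by blast

end
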